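(* Let $\phi_1,\ldots,\phi_n \vdash \psi_0$ be a sequent of $NOM$ ($n\ge 0$). The following are equivalent: (1) $\phi_1,\ldots,\phi_n\vdash\psi_0$ is derivable in $NOM$ extended by the exchange rule (from $\Gamma,\phi,\psi,\Delta\vdash\chi$ infer $\Gamma,\psi,\phi,\Delta\vdash\chi$, for arbitrary finite sequences $\Gamma,\Delta$ and formulas $\phi,\psi,\chi$); (2) $\phi_1,\ldots,\phi_n\vdash\psi_0$ is derivable in Gentzen's classical sequent calculus $LK$ (the system $G1$ of Kleene's Introduction to Metamathematics); (3) the formula $(\phi_1\wedge\cdots\wedge\phi_n)\rightarrow\psi_0$ is derivable in Kleene's Hilbert-style system $H$ for classical logic, i.e. is a classical tautology. When $n=0$, $(\phi_1\wedge\cdots\wedge\phi_n)\rightarrow\psi_0$ means $\psi_0$.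
   Context: The propositional deductive system $NOM$: formulas are built from propositional letters using the binary connectives $\wedge$, $\rightarrow$ and the unary connective $\neg$. A sequent is an expression $\phi_1,\ldots,\phi_n \vdash \psi$ with $n\ge 0$, whose antecedent is a finite sequence (order matters, repetitions allowed) of formulas. Below $\Gamma$ denotes a finite, possibly empty, sequence of formulas, $\phi,\psi,\chi$ formulas, and commas denote concatenation. A sequent is derivable in $NOM$ if it can be obtained with the following rules (premises $\Rightarrow$ conclusion): (assumption) $\Gamma,\phi\vdash\phi$, no premises; (cut) $\Gamma\vdash\phi$ and $\Gamma,\phi\vdash\psi$ $\Rightarrow$ $\Gamma\vdash\psi$; (paste) $\Gamma\vdash\phi$ and $\Gamma\vdash\psi$ $\Rightarrow$ $\Gamma,\phi\vdash\psi$; (compatible exchange) $\Gamma,\phi,\psi\vdash\phi$ and $\Gamma,\phi,\psi\vdash\chi$ and $\Gamma,\psi,\phi\vdash\psi$ $\Rightarrow$ $\Gamma,\psi,\phi\vdash\chi$; ($\wedge$-introduction) $\Gamma\vdash\phi$ and $\Gamma\vdash\psi$ $\Rightarrow$ $\Gamma\vdash\phi\wedge\psi$; ($\wedge$-elimination) $\Gamma\vdash\phi\wedge\psi$ $\Rightarrow$ $\Gamma\vdash\phi$, and $\Gamma\vdash\phi\wedge\psi$ $\Rightarrow$ $\Gamma\vdash\psi$; ($\rightarrow$-introduction) $\Gamma,\phi\vdash\psi$ $\Rightarrow$ $\Gamma\vdash\phi\rightarrow\psi$; ($\rightarrow$-elimination) $\Gamma\vdash\phi\rightarrow\psi$ $\Rightarrow$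 $\Gamma,\phi\vdash\psi$; (excluded middle) $\Gamma,\phi\vdash\psi$ and $\Gamma,\neg\phi\vdash\psi$ $\Rightarrow$ $\Gamma\vdash\psi$; (deductive explosion) $\Gamma\vdash\neg\phi$ $\Rightarrow$ $\Gamma,\phi\vdash\psi$. *)

theory Defs
  imports Main
begin

datatype form = Letter nat | And form form | Imp form form | Neg form

text \<open>nom_deriv False G p : the sequent G |- p is derivable in NOM.
      nom_deriv True G p  : derivable in NOM extended by the exchange rule.\<close>

inductive nom_deriv :: "bool \<Rightarrow> form list \<Rightarrow> form \<Rightarrow> bool" for exch :: bool where
  assumption: "nom_deriv exch (G @ [p]) p"
| cut: "nom_deriv exch G p \<Longrightarrow> nom_deriv exch (G @ [p]) q \<Longrightarrow> nom_deriv exch G q"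
| paste: "nom_deriv exch G p \<Longrightarrow> nom_deriv exch G q \<Longrightarrow> nom_deriv exch (G @ [p]) q"
| compat_exchange: "nom_deriv exch (G @ [p, q]) p \<Longrightarrow> nom_deriv exch (G @ [p, q]) r
     \<Longrightarrow> nom_deriv exch (G @ [q, p]) q \<Longrightarrow> nom_deriv exch (G @ [q, p]) r"
| conj_intro: "nom_deriv exch G p \<Longrightarrow> nom_deriv exch G q \<Longrightarrow> nom_deriv exch G (And p q)"
| conj_elim1: "nom_deriv exch G (And p q) \<Longrightarrow> nom_deriv exch G p"
| conj_elim2: "nom_deriv exch G (And p q) \<Longrightarrow> nom_deriv exch G q"
| imp_intro: "nom_deriv exch (G @ [p]) q \<Longrightarrow> nom_deriv exch G (Imp p q)"
| imp_elim: "nom_deriv exch G (Imp p q) \<Longrightarrow> nom_deriv exch (G @ [p]) q"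
| excluded_middle: "nom_deriv exch (G @ [p]) q \<Longrightarrow> nom_deriv exch (G @ [Neg p]) q
     \<Longrightarrow> nom_deriv exch G q"
| explosion: "nom_deriv exch G (Neg p) \<Longrightarrow> nom_deriv exch (G @ [p]) q"
| exchange: "exch \<Longrightarrow> nom_deriv exch (G @ [p, q] @ D) r \<Longrightarrow> nom_deriv exch (G @ [q, p] @ D) r"

inductive lk :: "form list \<Rightarrow> form list \<Rightarrow> bool" where
  axiom: "lk [c] [c]"
| thin_l: "lk G T \<Longrightarrow> lk (c # G) T"
| thin_r: "lk G T \<Longrightarrow> lk G (T @ [c])"
| contr_l: "lk (c # c # G) T \<Longrightarrow> lk (c # G) T"
| contr_r: "lk G (T @ [c, c]) \<Longrightarrow> lk G (T @ [c])"
| inter_l: "lk (D @ [d, c] @ G) T \<Longrightarrow> lk (D @ [c, d] @ G) T"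
| inter_r: "lk G (T @ [d, c] @ L) \<Longrightarrow> lk G (T @ [c, d] @ L)"
| cut: "lk D (L @ [c]) \<Longrightarrow> lk (c # G) T \<Longrightarrow> lk (D @ G) (L @ T)"
| imp_r: "lk (a # G) (T @ [b]) \<Longrightarrow> lk G (T @ [Imp a b])"
| imp_l: "lk D (L @ [a]) \<Longrightarrow> lk (b # G) T \<Longrightarrow> lk (Imp a b # D @ G) (L @ T)"
| and_r: "lk G (T @ [a]) \<Longrightarrow> lk G (T @ [b]) \<Longrightarrow> lk G (T @ [And a b])"
| and_l1: "lk (a # G) T \<Longrightarrow> lk (And a b # G) T"
| and_l2: "lk (b # G) T \<Longrightarrow> lk (And a b # G) T"
| neg_r: "lk (a # G) T \<Longrightarrow> lk G (T @ [Neg a])"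
| neg_l: "lk G (T @ [a]) \<Longrightarrow> lk (Neg a # G) T"

inductive hilbert :: "form \<Rightarrow> bool" where
  ax1a: "hilbert (Imp a (Imp b a))"
| ax1b: "hilbert (Imp (Imp a b) (Imp (Imp a (Imp b c)) (Imp a c)))"
| ax3: "hilbert (Imp a (Imp b (And a b)))"
| ax4a: "hilbert (Imp (And a b) a)"
| ax4b: "hilbert (Imp (And a b) b)"
| ax7: "hilbert (Imp (Imp a b) (Imp (Imp a (Neg b)) (Neg a)))"
| ax8: "hilbert (Imp (Neg (Neg a)) a)"
| mp: "hilbert a \<Longrightarrow> hilbert (Imp a b) \<Longrightarrow> hilbert b"

fun eval :: "(nat \<Rightarrow> bool) \<Rightarrow> form \<Rightarrow> bool" where
  "eval v (Letter n) = v n"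
| "eval v (And p q) = (eval v p \<and> eval v q)"
| "eval v (Imp p q) = (eval v p \<longrightarrow> eval v q)"
| "eval v (Neg p) = (\<not> eval v p)"

definition tautology :: "form \<Rightarrow> bool" where
  "tautology p \<longleftrightarrow> (\<forall>v. eval v p)"

fun conj_list :: "form list \<Rightarrow> form" where
  "conj_list [] = undefined"
| "conj_list [p] = p"
| "conj_list (p # ps) = And p (conj_list ps)"

definition seq_formula :: "form list \<Rightarrow> form \<Rightarrow> form" where
  "seq_formula ps q = (if ps = [] then q else Imp (conj_list ps) q)"

end

theory Submission
  imports Defs "HOL-Library.Multiset"
begin

section \<open>Permutation closure\<close>

lemma move_front:
  assumes sw: "\<And>G p q D. P (G @ [p, q] @ D) \<Longrightarrow> P (G @ [q, p] @ D)"
  shows "P (X @ A @ [c] @ B) \<Longrightarrow> P (X @ [c] @ A @ B)"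
proof (induction A arbitrary: B rule: rev_induct)
  case Nil then show ?case by simp
next
  case (snoc a A)
  have "P ((X @ A) @ [a, c] @ B)" using snoc.prems by simp
  then have "P ((X @ A) @ [c, a] @ B)" by (rule sw)
  then have "P (X @ A @ [c] @ (a # B))" by simp
  then have "P (X @ [c] @ A @ (a # B))" by (rule snoc.IH)
  then show ?case by simp
qed

lemma perm_closed_gen:
  assumes sw: "\<And>G p q D. P (G @ [p, q] @ D) \<Longrightarrow> P (G @ [q, p] @ D)"
  shows "P (X @ G) \<Longrightarrow> mset G = mset G' \<Longrightarrow> P (X @ G')"
proof (induction G' arbitrary: X G)
  case Nil
  then have "G = []" by simp
  then show ?case using Nil by simp
next
  case (Cons c G')
  have "c \<in> set G" using Cons.prems(2) by (metis list.set_intros(1) set_mset_mset)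
  then obtain A B where G: "G = A @ c # B" by (meson split_list)
  have "P (X @ A @ [c] @ B)" using Cons.prems(1) G by simp
  then have "P (X @ [c] @ A @ B)" using move_front[of P, OF sw] by blast
  then have "P ((X @ [c]) @ (A @ B))" by simp
  moreover have "mset (A @ B) = mset G'" using Cons.prems(2) G by simp
  ultimately have "P ((X @ [c]) @ G')" by (rule Cons.IH)
  then show ?case by simp
qed

lemma perm_closed:
  assumes sw: "\<And>G p q D. P (G @ [p, q] @ D) \<Longrightarrow> P (G @ [q, p] @ D)"
  shows "P G \<Longrightarrow> mset G = mset G' \<Longrightarrow> P G'"
  using perm_closed_gen[where P=P and X="[]", OF sw] by simp

lemma eval_conj_list: "ps \<noteq> [] \<Longrightarrow> eval v (conj_list ps) = (\<forall>x\<in>set ps. eval v x)"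
  by (induction ps rule: conj_list.induct) auto

lemma taut_seq: "tautology (seq_formula ps q) = (\<forall>v. (\<forall>x\<in>set ps. eval v x) \<longrightarrow> eval v q)"
  by (auto simp: tautology_def seq_formula_def eval_conj_list)

lemma nom_sound: "nom_deriv e G p \<Longrightarrow> (\<forall>x\<in>set G. eval v x) \<longrightarrow> eval v p"
  by (induction rule: nom_deriv.induct) auto

lemma lk_sound: "lk G T \<Longrightarrow> (\<forall>x\<in>set G. eval v x) \<longrightarrow> (\<exists>y\<in>set T. eval v y)"
  by (induction rule: lk.induct) auto

lemma hilbert_sound: "hilbert p \<Longrightarrow> eval v p"
  by (induction rule: hilbert.induct) auto


section \<open>Hilbert derivations from hypotheses\<close>

inductive hdv :: "form set \<Rightarrow> form \<Rightarrow> bool" for S where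
  hyp: "a \<in> S \<Longrightarrow> hdv S a"
| ax: "hilbert a \<Longrightarrow> hdv S a"
| mpp: "hdv S a \<Longrightarrow> hdv S (Imp a b) \<Longrightarrow> hdv S b"

lemma hd_mono: "hdv S a \<Longrightarrow> S \<subseteq> S' \<Longrightarrow> hdv S' a"
  by (induction rule: hdv.induct) (auto intro: hdv.intros)

lemma hd_empty: "hdv {} a \<Longrightarrow> hilbert a"
  by (induction rule: hdv.induct) (auto intro: hilbert.intros)

lemma hilbert_id: "hilbert (Imp a a)"
proof -
  have 1: "hilbert (Imp a (Imp a a))" by (rule ax1a)
  have 2: "hilbert (Imp a (Imp (Imp a a) a))" by (rule ax1a)
  have 3: "hilbert (Imp (Imp a (Imp a a)) (Imp (Imp a (Imp (Imp a a) a)) (Imp a a)))" by (rule ax1b)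
  show ?thesis using mp[OF 2 mp[OF 1 3]] .
qed

lemma deduction: "hdv S' b \<Longrightarrow> S' = insert a S \<Longrightarrow> hdv S (Imp a b)"
proof (induction rule: hdv.induct)
  case (hyp c)
  then show ?case
  proof (cases "c = a")
    case True then show ?thesis using hilbert_id by (auto intro: hdv.ax)
  next
    case False
    then have "hdv S c" using hyp by (auto intro: hdv.hyp)
    then show ?thesis by (rule mpp) (auto intro: hdv.ax ax1a)
  qed
next
  case (ax c)
  then show ?case by (meson ax1a hdv.ax mpp)
next
  case (mpp c d)
  have "hdv S (Imp (Imp a c) (Imp (Imp a (Imp c d)) (Imp a d)))" by (auto intro: hdv.ax ax1b)
  then show ?case using mpp by (meson hdv.mpp)
qed

lemma ded: "hdv (insert a S) b \<Longrightarrow> hdv S (Imp a b)"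
  using deduction by blast

lemma hd_ax: "hilbert a \<Longrightarrow> hdv S a" by (rule ax)

lemma hd_ins: "hdv S a \<Longrightarrow> hdv (insert b S) a"
  by (erule hd_mono) auto

lemma hd_explode: "hdv S a \<Longrightarrow> hdv S (Neg a) \<Longrightarrow> hdv S b"
proof -
  assume a: "hdv S a" and na: "hdv S (Neg a)"
  have 1: "hdv S (Imp (Neg b) a)" using a by (meson ax1a hdv.ax mpp)
  have 2: "hdv S (Imp (Neg b) (Neg a))" using na by (meson ax1a hdv.ax mpp)
  have "hdv S (Neg (Neg b))" using 1 2 by (meson ax7 hdv.ax mpp)
  then show ?thesis by (meson ax8 hdv.ax mpp)
qed

lemma hd_negI: "hdv (insert a S) b \<Longrightarrow> hdv (insert a S) (Neg b) \<Longrightarrow> hdv S (Neg a)"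
  by (meson ax7 ded hdv.ax mpp)

lemma hyp_ins: "hdv (insert a S) a" by (rule hdv.hyp) simp

lemma hd_dneg: "hdv S a \<Longrightarrow> hdv S (Neg (Neg a))"
  by (rule hd_negI[OF hd_ins hyp_ins])

lemma hd_cases: "hdv (insert a S) p \<Longrightarrow> hdv (insert (Neg a) S) p \<Longrightarrow> hdv S p"
proof -
  assume 1: "hdv (insert a S) p" and 2: "hdv (insert (Neg a) S) p"
  have c1: "hdv (insert (Neg p) S) (Neg a)"
    by (rule hd_negI[OF hd_mono[OF 1] hd_ins[OF hyp_ins]]) auto
  have c2: "hdv (insert (Neg p) S) (Neg (Neg a))"
    by (rule hd_negI[OF hd_mono[OF 2] hd_ins[OF hyp_ins]]) auto
  have "hdv S (Neg (Neg p))" using hd_negI[OF c1 c2] .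
  then show ?thesis by (meson ax8 hdv.ax mpp)
qed

definition lit :: "(nat \<Rightarrow> bool) \<Rightarrow> form \<Rightarrow> form" where
  "lit v q = (if eval v q then q else Neg q)"

fun vars :: "form \<Rightarrow> nat set" where
  "vars (Letter n) = {n}"
| "vars (And p q) = vars p \<union> vars q"
| "vars (Imp p q) = vars p \<union> vars q"
| "vars (Neg p) = vars p"

definition lits :: "(nat \<Rightarrow> bool) \<Rightarrow> nat set \<Rightarrow> form set" where
  "lits v X = (\<lambda>n. lit v (Letter n)) ` X"

lemma kalmar: "vars p \<subseteq> X \<Longrightarrow> hdv (lits v X) (lit v p)"
proof (induction p)
  case (Letter n)
  then show ?case by (auto simp: lits_def intro: hdv.hyp)
next
  case (And a b)
  then have A: "hdv (lits v X) (lit v a)" and B: "hdv (lits v X) (lit v b)" by auto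
  show ?case
  proof (cases "eval v a")
    case ta: True
    show ?thesis
    proof (cases "eval v b")
      case True
      then show ?thesis using ta A B unfolding lit_def by (simp, meson ax3 hdv.ax mpp)
    next
      case False
      then have nb: "hdv (lits v X) (Neg b)" using B by (simp add: lit_def)
      have "hdv (lits v X) (Neg (And a b))"
        by (rule hd_negI[OF mpp[OF hyp_ins hdv.ax[OF ax4b]] hd_ins[OF nb]])
      then show ?thesis using False by (simp add: lit_def)
    qed
  next
    case False
    then have na: "hdv (lits v X) (Neg a)" using A by (simp add: lit_def)
    have "hdv (lits v X) (Neg (And a b))"
      by (rule hd_negI[OF mpp[OF hyp_ins hdv.ax[OF ax4a]] hd_ins[OF na]])
    then show ?thesis using False by (simp add: lit_def)
  qed
next
  case (Imp a b)
  then have A: "hdv (lits v X) (lit v a)" and B: "hdv (lits v X) (lit v b)" by auto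
  show ?case
  proof (cases "eval v b")
    case True
    then have "hdv (lits v X) b" using B by (simp add: lit_def)
    then have "hdv (lits v X) (Imp a b)" by (rule mpp[OF _ hdv.ax[OF ax1a]])
    then show ?thesis using True by (simp add: lit_def)
  next
    case nb: False
    then have nB: "hdv (lits v X) (Neg b)" using B by (simp add: lit_def)
    show ?thesis
    proof (cases "eval v a")
      case True
      then have aA: "hdv (lits v X) a" using A by (simp add: lit_def)
      have "hdv (lits v X) (Neg (Imp a b))"
        by (rule hd_negI[OF mpp[OF hd_ins[OF aA] hyp_ins] hd_ins[OF nB]])
      then show ?thesis using True nb by (simp add: lit_def)
    next
      case False
      then have nA: "hdv (lits v X) (Neg a)" using A by (simp add: lit_def)
      have "hdv (lits v X) (Imp a b)"
        by (rule ded, rule hd_explode[OF hyp_ins hd_ins[OF nA]])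
      then show ?thesis using False by (simp add: lit_def)
    qed
  qed
next
  case (Neg a)
  then have A: "hdv (lits v X) (lit v a)" by auto
  then show ?case by (auto simp: lit_def intro: hd_dneg)
qed

lemma finite_vars: "finite (vars p)"
  by (induction p) auto

lemma elim_vars:
  assumes taut: "\<forall>v. eval v p"
  shows "finite Y \<Longrightarrow> Y \<subseteq> X \<Longrightarrow> vars p \<subseteq> X \<Longrightarrow> \<forall>v. hdv (lits v (X - Y)) p"
proof (induction Y rule: finite_induct)
  case empty
  then show ?case using kalmar[of p X] taut by (simp add: lit_def)
next
  case (insert n Y)
  show ?case
  proof
    fix v
    let ?R = "lits v (X - insert n Y)"
    have nX: "n \<in> X" using insert by auto
    have e1: "lits (v(n:=True)) (X - Y) = insert (Letter n) ?R"
      using nX insert(2) by (auto simp: lits_def lit_def)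
    have e0: "lits (v(n:=False)) (X - Y) = insert (Neg (Letter n)) ?R"
      using nX insert(2) by (auto simp: lits_def lit_def)
    have "hdv (insert (Letter n) ?R) p" using insert e1 by (metis subset_insertI2 insert_subset)
    moreover have "hdv (insert (Neg (Letter n)) ?R) p" using insert e0 by (metis insert_subset)
    ultimately show "hdv ?R p" by (rule hd_cases)
  qed
qed

lemma hilbert_complete: "\<forall>v. eval v p \<Longrightarrow> hilbert p"
  using elim_vars[of p "vars p" "vars p"] finite_vars[of p] hd_empty by (auto simp: lits_def)


section \<open>NOM with exchange\<close>

abbreviation nomx where "nomx \<equiv> nom_deriv True"

lemma nom_perm: "nomx G q \<Longrightarrow> mset G = mset G' \<Longrightarrow> nomx G' q"
proof -
  have sw: "\<And>G p r D. nomx (G @ [p, r] @ D) q \<Longrightarrow> nomx (G @ [r, p] @ D) q"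
    using nom_deriv.exchange[of True] by blast
  show "nomx G q \<Longrightarrow> mset G = mset G' \<Longrightarrow> nomx G' q"
    using perm_closed[where P="\<lambda>G. nomx G q", OF sw] by blast
qed

lemma nom_weak: "nomx G q \<Longrightarrow> nomx (G @ [r]) q"
proof -
  assume h: "nomx G q"
  have "nomx (G @ [r] @ [q]) q" using nom_deriv.assumption[of True "G @ [r]" q] by simp
  then have "nomx (G @ [r, q] @ []) q" by simp
  then have "nomx (G @ [q, r] @ []) q" by (rule nom_deriv.exchange[rotated]) simp
  then have "nomx ((G @ [q]) @ [r]) q" by simp
  then have "nomx (G @ [q]) (Imp r q)" by (rule nom_deriv.imp_intro)
  then have "nomx G (Imp r q)" by (rule nom_deriv.cut[OF h])
  then show ?thesis by (rule nom_deriv.imp_elim)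
qed

lemma nom_weak_list: "nomx G q \<Longrightarrow> nomx (G @ H) q"
proof (induction H rule: rev_induct)
  case Nil then show ?case by simp
next
  case (snoc x H) then show ?case using nom_weak[of "G @ H" q x] by simp
qed

lemma nom_mem: "p \<in> set G \<Longrightarrow> nomx G p"
proof -
  assume p: "p \<in> set G"
  have "nomx (remove1 p G @ [p]) p" by (rule nom_deriv.assumption)
  moreover have "mset (remove1 p G @ [p]) = mset G" using p by simp
  ultimately show ?thesis by (rule nom_perm)
qed

lemma nom_mp: "nomx G (Imp a b) \<Longrightarrow> nomx G a \<Longrightarrow> nomx G b"
  by (meson nom_deriv.cut nom_deriv.imp_elim)

lemma nom_impI: "nomx (G @ [a]) b \<Longrightarrow> nomx G (Imp a b)"
  by (rule nom_deriv.imp_intro)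

lemma hilbert_nom: "hilbert p \<Longrightarrow> nomx [] p"
proof (induction rule: hilbert.induct)
  case (ax1a a b)
  have "nomx [a, b] a" by (rule nom_mem) simp
  then show ?case using nom_impI[of "[a]" b a] nom_impI[of "[]" a] by simp
next
  case (ax1b a b c)
  let ?G = "[Imp a b, Imp a (Imp b c), a]"
  have 1: "nomx ?G a" by (rule nom_mem) simp
  have 2: "nomx ?G (Imp a b)" by (rule nom_mem) simp
  have 3: "nomx ?G (Imp a (Imp b c))" by (rule nom_mem) simp
  have "nomx ?G c" by (rule nom_mp[OF nom_mp[OF 3 1] nom_mp[OF 2 1]])
  then show ?case using nom_impI[of "[Imp a b, Imp a (Imp b c)]" a c]
      nom_impI[of "[Imp a b]"] nom_impI[of "[]"] by simp
next
  case (ax3 a b)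
  have "nomx [a, b] (And a b)" by (rule nom_deriv.conj_intro; rule nom_mem; simp)
  then show ?case using nom_impI[of "[a]" b] nom_impI[of "[]" a] by simp
next
  case (ax4a a b)
  have "nomx [And a b] a" by (rule nom_deriv.conj_elim1, rule nom_mem) simp
  then show ?case using nom_impI[of "[]"] by simp
next
  case (ax4b a b)
  have "nomx [And a b] b" by (rule nom_deriv.conj_elim2, rule nom_mem) simp
  then show ?case using nom_impI[of "[]"] by simp
next
  case (ax7 a b)
  let ?G = "[Imp a b, Imp a (Neg b)]"
  have 1: "nomx (?G @ [a]) b" by (rule nom_mp[where a=a]; rule nom_mem; simp)
  have 2: "nomx (?G @ [a]) (Neg b)" by (rule nom_mp[where a=a]; rule nom_mem; simp)
  have 3: "nomx ((?G @ [a]) @ [b]) (Neg a)" using nom_deriv.explosion[OF 2] .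
  have 4: "nomx (?G @ [a]) (Neg a)" by (rule nom_deriv.cut[OF 1 3])
  have 5: "nomx (?G @ [Neg a]) (Neg a)" by (rule nom_deriv.assumption)
  have "nomx ?G (Neg a)" by (rule nom_deriv.excluded_middle[OF 4 5])
  then show ?case using nom_impI[of "[Imp a b]"] nom_impI[of "[]"] by simp
next
  case (ax8 a)
  have 1: "nomx ([Neg (Neg a)] @ [a]) a" by (rule nom_deriv.assumption)
  have 0: "nomx [Neg (Neg a)] (Neg (Neg a))" using nom_deriv.assumption[of True "[]"] by simp
  have 2: "nomx ([Neg (Neg a)] @ [Neg a]) a" by (rule nom_deriv.explosion[OF 0])
  have "nomx [Neg (Neg a)] a" by (rule nom_deriv.excluded_middle[OF 1 2])
  then show ?case using nom_impI[of "[]"] by simp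
next
  case (mp a b)
  then show ?case using nom_mp by blast
qed

lemma nom_conj: "ps \<noteq> [] \<Longrightarrow> set ps \<subseteq> set G \<Longrightarrow> nomx G (conj_list ps)"
proof (induction ps rule: conj_list.induct)
  case 1 then show ?case by simp
next
  case (2 p) then show ?case by (simp add: nom_mem)
next
  case (3 p v va)
  then have "nomx G (conj_list (v # va))" by simp
  moreover have "nomx G p" using 3 by (simp add: nom_mem)
  ultimately show ?case by (simp add: nom_deriv.conj_intro)
qed

lemma hilbert_to_nom: "hilbert (seq_formula phis psi) \<Longrightarrow> nomx phis psi"
proof (cases "phis = []")
  case True
  assume "hilbert (seq_formula phis psi)"
  then show ?thesis using True hilbert_nom by (simp add: seq_formula_def)
next
  case False
  assume "hilbert (seq_formula phis psi)"
  then have "nomx [] (Imp (conj_list phis) psi)" using False hilbert_nom by (simp add: seq_formula_def)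
  then have "nomx phis (Imp (conj_list phis) psi)" using nom_weak_list[of "[]"] by fastforce
  moreover have "nomx phis (conj_list phis)" using False by (simp add: nom_conj)
  ultimately show ?thesis by (rule nom_mp)
qed


section \<open>LK\<close>

lemma lk_perm: "lk G T \<Longrightarrow> mset G = mset G' \<Longrightarrow> lk G' T"
proof -
  have sw: "\<And>G p r D. lk (G @ [p, r] @ D) T \<Longrightarrow> lk (G @ [r, p] @ D) T"
    using lk.inter_l by blast
  show "lk G T \<Longrightarrow> mset G = mset G' \<Longrightarrow> lk G' T"
    using perm_closed[where P="\<lambda>G. lk G T", OF sw] by blast
qed

lemma lk_weak_list: "lk G T \<Longrightarrow> lk (H @ G) T"
  by (induction H) (simp_all add: lk.thin_l)

lemma lk_contr_mem: "lk (x # G) T \<Longrightarrow> x \<in> set G \<Longrightarrow> lk G T"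
proof -
  assume h: "lk (x # G) T" and x: "x \<in> set G"
  then obtain A B where G: "G = A @ x # B" by (meson split_list)
  have m1: "mset (x # G) = mset (x # x # (A @ B))" using G by simp
  have m2: "mset (x # (A @ B)) = mset G" using G by simp
  have "lk (x # x # (A @ B)) T" by (rule lk_perm[OF h m1])
  then have "lk (x # (A @ B)) T" by (rule lk.contr_l)
  then show ?thesis by (rule lk_perm[OF _ m2])
qed

lemma lk_sub_aux: "lk (H @ G') T \<Longrightarrow> set H \<subseteq> set G' \<Longrightarrow> lk G' T"
proof (induction H)
  case Nil then show ?case by simp
next
  case (Cons x H)
  have a: "lk (x # (H @ G')) T" using Cons.prems(1) by simp
  have b: "x \<in> set (H @ G')" using Cons.prems(2) by simp
  have "lk (H @ G') T" by (rule lk_contr_mem[OF a b])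
  moreover have "set H \<subseteq> set G'" using Cons.prems(2) by simp
  ultimately show ?case by (rule Cons.IH)
qed

lemma lk_sub: "lk G T \<Longrightarrow> set G \<subseteq> set G' \<Longrightarrow> lk G' T"
proof -
  assume h: "lk G T" and s: "set G \<subseteq> set G'"
  have "lk (G' @ G) T" using lk_weak_list[OF h] .
  then have "lk (G @ G') T" by (rule lk_perm) simp
  then show ?thesis using s by (rule lk_sub_aux)
qed

lemma lk_mem: "p \<in> set G \<Longrightarrow> lk G [p]"
  by (rule lk_sub[OF lk.axiom]) simp

lemma lk_mp: "lk G [Imp a b] \<Longrightarrow> lk G [a] \<Longrightarrow> lk G [b]"
proof -
  assume 1: "lk G [Imp a b]" and 2: "lk G [a]"
  have "lk (Imp a b # G @ []) ([] @ [b])" by (rule lk.imp_l) (use 2 lk.axiom in simp_all)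
  then have "lk (Imp a b # G) [b]" by simp
  then have "lk (G @ G) ([] @ [b])" using lk.cut[of G "[]" "Imp a b"] 1 by simp
  then show ?thesis by (simp add: lk_sub)
qed

lemma lk_impI: "lk (a # G) [b] \<Longrightarrow> lk G [Imp a b]"
  using lk.imp_r[of a G "[]" b] by simp

lemma lk_andI: "lk G [a] \<Longrightarrow> lk G [b] \<Longrightarrow> lk G [And a b]"
  using lk.and_r[of G "[]" a b] by simp

lemma lk_cut1: "lk G [c] \<Longrightarrow> lk (c # G) T \<Longrightarrow> lk G T"
proof -
  assume "lk G [c]" "lk (c # G) T"
  then have "lk (G @ G) ([] @ T)" using lk.cut[of G "[]" c G T] by simp
  then show ?thesis by (simp add: lk_sub)
qed

lemma lk_andE1: "lk G [And a b] \<Longrightarrow> lk G [a]"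
proof -
  assume h: "lk G [And a b]"
  have "lk [And a b] [a]" by (rule lk.and_l1) (rule lk.axiom)
  then have "lk (And a b # G) [a]" by (rule lk_sub) auto
  then show ?thesis by (rule lk_cut1[OF h])
qed

lemma lk_andE2: "lk G [And a b] \<Longrightarrow> lk G [b]"
proof -
  assume h: "lk G [And a b]"
  have "lk [And a b] [b]" by (rule lk.and_l2) (rule lk.axiom)
  then have "lk (And a b # G) [b]" by (rule lk_sub) auto
  then show ?thesis by (rule lk_cut1[OF h])
qed

lemma lk_negI: "lk (a # G) [] \<Longrightarrow> lk G [Neg a]"
  using lk.neg_r[of a G "[]"] by simp

lemma lk_negE: "lk G [Neg a] \<Longrightarrow> lk G [a] \<Longrightarrow> lk G []"
proof -
  assume 1: "lk G [Neg a]" and 2: "lk G [a]"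
  have "lk (Neg a # G) []" using lk.neg_l[of G "[]" a] 2 by simp
  then show ?thesis by (rule lk_cut1[OF 1])
qed

lemma lk_thinR: "lk G [] \<Longrightarrow> lk G [c]"
  using lk.thin_r[of G "[]" c] by simp

lemma hilbert_lk: "hilbert p \<Longrightarrow> lk [] [p]"
proof (induction rule: hilbert.induct)
  case (ax1a a b)
  have "lk [b, a] [a]" by (rule lk_mem) simp
  then show ?case by (intro lk_impI)
next
  case (ax1b a b c)
  let ?G = "[a, Imp a (Imp b c), Imp a b]"
  have 1: "lk ?G [a]" by (rule lk_mem) simp
  have 2: "lk ?G [Imp a b]" by (rule lk_mem) simp
  have 3: "lk ?G [Imp a (Imp b c)]" by (rule lk_mem) simp
  have "lk ?G [c]" by (rule lk_mp[OF lk_mp[OF 3 1] lk_mp[OF 2 1]])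
  then show ?case by (intro lk_impI)
next
  case (ax3 a b)
  have "lk [b, a] [And a b]" by (rule lk_andI; rule lk_mem; simp)
  then show ?case by (intro lk_impI)
next
  case (ax4a a b)
  have "lk [And a b] [a]" by (rule lk_andE1, rule lk_mem) simp
  then show ?case by (intro lk_impI)
next
  case (ax4b a b)
  have "lk [And a b] [b]" by (rule lk_andE2, rule lk_mem) simp
  then show ?case by (intro lk_impI)
next
  case (ax7 a b)
  let ?G = "[a, Imp a (Neg b), Imp a b]"
  have 1: "lk ?G [b]" by (rule lk_mp[where a=a]; rule lk_mem; simp)
  have 2: "lk ?G [Neg b]" by (rule lk_mp[where a=a]; rule lk_mem; simp)
  have "lk ?G []" by (rule lk_negE[OF 2 1])
  then have "lk [Imp a (Neg b), Imp a b] [Neg a]" by (rule lk_negI)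
  then show ?case by (intro lk_impI)
next
  case (ax8 a)
  have "lk [] ([a] @ [Neg a])" using lk.neg_r[of a "[]" "[a]"] lk.axiom by simp
  then have "lk [Neg (Neg a)] [a]" using lk.neg_l[of "[]" "[a]" "Neg a"] by simp
  then show ?case by (intro lk_impI)
next
  case (mp a b)
  then show ?case using lk_mp by blast
qed

lemma lk_conj: "ps \<noteq> [] \<Longrightarrow> set ps \<subseteq> set G \<Longrightarrow> lk G [conj_list ps]"
proof (induction ps rule: conj_list.induct)
  case 1 then show ?case by simp
next
  case (2 p) then show ?case by (simp add: lk_mem)
next
  case (3 p v va)
  then have "lk G [conj_list (v # va)]" by simp
  moreover have "lk G [p]" using 3 by (simp add: lk_mem)
  ultimately show ?case by (simp add: lk_andI)
qed

lemma hilbert_to_lk: "hilbert (seq_formula phis psi) \<Longrightarrow> lk phis [psi]"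
proof (cases "phis = []")
  case True
  assume "hilbert (seq_formula phis psi)"
  then show ?thesis using True hilbert_lk by (simp add: seq_formula_def)
next
  case False
  assume "hilbert (seq_formula phis psi)"
  then have "lk [] [Imp (conj_list phis) psi]" using False hilbert_lk by (simp add: seq_formula_def)
  then have "lk phis [Imp (conj_list phis) psi]" using lk_weak_list[of "[]" _ phis] by simp
  moreover have "lk phis [conj_list phis]" using False by (simp add: lk_conj)
  ultimately show ?thesis by (rule lk_mp)
qed

theorem theorem3p2:
  fixes phis :: "form list" and psi0 :: form
  shows "(nom_deriv True phis psi0 \<longleftrightarrow> lk phis [psi0])
       \<and> (lk phis [psi0] \<longleftrightarrow> hilbert (seq_formula phis psi0))
       \<and> (hilbert (seq_formula phis psi0) \<longleftrightarrow> tautology (seq_formula phis psi0))"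
proof -
  have H: "hilbert (seq_formula phis psi0) \<longleftrightarrow> tautology (seq_formula phis psi0)"
    using hilbert_sound hilbert_complete by (auto simp: tautology_def)
  have N: "nom_deriv True phis psi0 \<longleftrightarrow> tautology (seq_formula phis psi0)"
    using nom_sound[of True phis psi0] hilbert_to_nom[of phis psi0] H by (auto simp: taut_seq)
  have L: "lk phis [psi0] \<longleftrightarrow> tautology (seq_formula phis psi0)"
    using lk_sound[of phis "[psi0]"] hilbert_to_lk[of phis psi0] H by (auto simp: taut_seq)
  show ?thesis using H N L by blast
qed

end
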